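(* Let $A\bowtie^{\theta} I$ be an amalgamated Banach algebra as in the context, and assume that $A\bowtie^\theta I$ is commutative, $\sigma(A)\neq\emptyset$, and $\theta(A)I=\{\theta(a)i: a\in A, i\in I\}$ has dense linear span in $I$. Then $$\mathrm{rad}(A\bowtie^{\theta} I)=\{(a,i): a\in\mathrm{rad}\,A,\ i\in\mathrm{rad}\,I\}.$$
   Context: Let $A$ and $B$ be Banach algebras, $\theta:A\to B$ a continuous algebra homomorphism with $\|\theta\|\le 1$, and $I$ a closed two-sided ideal of $B$. The amalgamated Banach algebra $A\bowtie^{\theta} I$ is the Banach space $\{(a,i): a\in A,\ i\in I\}$ with norm $\|(a,i)\|=\|a\|+\|i\|$ and product $(a,i)\cdot(a',i')=(aa',\ \theta(a)i'+i\theta(a')+ii')$. For a commutative Banach algebra $C$, $\sigma(C)$ is the set of nonzero multiplicative linear functionals on $C$, and $\mathrm{rad}\,C=\bigcap_{\chi\in\sigma(C)}\ker\chi$ (equal to $C$ if $\sigma(C)=\emptyset$). *)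

theory Defs
  imports "HOL-Analysis.Analysis"
begin

text \<open>Complex Banach algebras (not necessarily unital) are modelled as a type of class
  banach and real_normed_algebra (completeness, real bilinear submultiplicative product)
  together with a complex scalar multiplication extending the real one.\<close>

definition complex_banach_algebra ::
  "(complex \<Rightarrow> 'a::{banach, real_normed_algebra} \<Rightarrow> 'a) \<Rightarrow> bool" where
  "complex_banach_algebra sm \<longleftrightarrow>
     (\<forall>r x. sm (complex_of_real r) x = r *\<^sub>R x) \<and>
     (\<forall>c x y. sm c (x + y) = sm c x + sm c y) \<and>
     (\<forall>c d x. sm (c + d) x = sm c x + sm d x) \<and>
     (\<forall>c d x. sm c (sm d x) = sm (c * d) x) \<and>
     (\<forall>c x y. sm c (x * y) = sm c x * y) \<and>
     (\<forall>c x y. x * sm c y = sm c (x * y)) \<and>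
     (\<forall>c x. norm (sm c x) = cmod c * norm x)"

text \<open>Nonzero multiplicative complex-linear functionals on an algebra with carrier S.
  (In a Banach algebra these are automatically continuous.)\<close>

definition is_character ::
  "'x set \<Rightarrow> ('x \<Rightarrow> 'x \<Rightarrow> 'x) \<Rightarrow> (complex \<Rightarrow> 'x \<Rightarrow> 'x) \<Rightarrow> ('x \<Rightarrow> 'x \<Rightarrow> 'x)
     \<Rightarrow> ('x \<Rightarrow> complex) \<Rightarrow> bool" where
  "is_character S add sm mul f \<longleftrightarrow>
     (\<forall>x\<in>S. \<forall>y\<in>S. f (add x y) = f x + f y) \<and>
     (\<forall>c. \<forall>x\<in>S. f (sm c x) = c * f x) \<and>
     (\<forall>x\<in>S. \<forall>y\<in>S. f (mul x y) = f x * f y) \<and>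
     (\<exists>x\<in>S. f x \<noteq> 0)"

text \<open>rad C = intersection of the kernels of all characters (= C if there are none).\<close>

definition rad_on ::
  "'x set \<Rightarrow> ('x \<Rightarrow> 'x \<Rightarrow> 'x) \<Rightarrow> (complex \<Rightarrow> 'x \<Rightarrow> 'x) \<Rightarrow> ('x \<Rightarrow> 'x \<Rightarrow> 'x) \<Rightarrow> 'x set" where
  "rad_on S add sm mul = {x\<in>S. \<forall>f. is_character S add sm mul f \<longrightarrow> f x = 0}"

definition cspan :: "(complex \<Rightarrow> 'a::real_vector \<Rightarrow> 'a) \<Rightarrow> 'a set \<Rightarrow> 'a set" where
  "cspan sm S = {x. \<exists>F c. finite F \<and> F \<subseteq> S \<and> x = (\<Sum>v\<in>F. sm (c v) v)}"

definition closed_ideal :: "(complex \<Rightarrow> 'b::{banach, real_normed_algebra} \<Rightarrow> 'b) \<Rightarrow> 'b set \<Rightarrow> bool" where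
  "closed_ideal sm I \<longleftrightarrow> closed I \<and> 0 \<in> I \<and>
     (\<forall>x\<in>I. \<forall>y\<in>I. x + y \<in> I) \<and> (\<forall>c. \<forall>x\<in>I. sm c x \<in> I) \<and>
     (\<forall>b. \<forall>x\<in>I. b * x \<in> I \<and> x * b \<in> I)"

definition contractive_alg_hom ::
  "(complex \<Rightarrow> 'a::{banach, real_normed_algebra} \<Rightarrow> 'a) \<Rightarrow> (complex \<Rightarrow> 'b::{banach, real_normed_algebra} \<Rightarrow> 'b)
     \<Rightarrow> ('a \<Rightarrow> 'b) \<Rightarrow> bool" where
  "contractive_alg_hom smA smB \<theta> \<longleftrightarrow>
     (\<forall>x y. \<theta> (x + y) = \<theta> x + \<theta> y) \<and> (\<forall>c x. \<theta> (smA c x) = smB c (\<theta> x)) \<and>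
     (\<forall>x y. \<theta> (x * y) = \<theta> x * \<theta> y) \<and> (\<forall>x. norm (\<theta> x) \<le> norm x)"

text \<open>Operations of the amalgamated algebra A \<bowtie>^\<theta> I (carrier UNIV \<times> I).\<close>

definition amal_add :: "'a::plus \<times> 'b::plus \<Rightarrow> 'a \<times> 'b \<Rightarrow> 'a \<times> 'b" where
  "amal_add p q = (fst p + fst q, snd p + snd q)"

definition amal_smul :: "(complex \<Rightarrow> 'a \<Rightarrow> 'a) \<Rightarrow> (complex \<Rightarrow> 'b \<Rightarrow> 'b) \<Rightarrow> complex \<Rightarrow> 'a \<times> 'b \<Rightarrow> 'a \<times> 'b" where
  "amal_smul smA smB c p = (smA c (fst p), smB c (snd p))"

definition amal_mult :: "('a::times \<Rightarrow> 'b::{times,plus}) \<Rightarrow> 'a \<times> 'b \<Rightarrow> 'a \<times> 'b \<Rightarrow> 'a \<times> 'b" where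
  "amal_mult \<theta> p q = (fst p * fst q, \<theta> (fst p) * snd q + snd p * \<theta> (fst q) + snd p * snd q)"

end

theory Submission
  imports Defs
begin

lemma rad_zero:
  assumes "x \<in> rad_on S add sm mul"
    and "\<forall>x\<in>S. \<forall>y\<in>S. f (add x y) = f x + f y"
    and "\<forall>c. \<forall>x\<in>S. f (sm c x) = c * f x"
    and "\<forall>x\<in>S. \<forall>y\<in>S. f (mul x y) = f x * f y"
  shows "f x = 0"
proof (cases "\<exists>x\<in>S. f x \<noteq> 0")
  case True
  then have "is_character S add sm mul f" using assms unfolding is_character_def by blast
  then show ?thesis using assms(1) unfolding rad_on_def by blast
next
  case False
  then show ?thesis using assms(1) unfolding rad_on_def by blast
qed

theorem theorem5p3:
  fixes smA :: "complex \<Rightarrow> 'a::{banach, real_normed_algebra} \<Rightarrow> 'a"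
    and smB :: "complex \<Rightarrow> 'b::{banach, real_normed_algebra} \<Rightarrow> 'b"
    and \<theta> :: "'a \<Rightarrow> 'b" and I :: "'b set"
  assumes "complex_banach_algebra smA" and "complex_banach_algebra smB"
    and "contractive_alg_hom smA smB \<theta>"
    and "closed_ideal smB I"
    and "\<forall>p\<in>UNIV \<times> I. \<forall>q\<in>UNIV \<times> I. amal_mult \<theta> p q = amal_mult \<theta> q p"
    and "\<exists>f. is_character UNIV (+) smA (*) f"
    and "I \<subseteq> closure (cspan smB {\<theta> a * i | a i. i \<in> I})"
  shows "rad_on (UNIV \<times> I) amal_add (amal_smul smA smB) (amal_mult \<theta>)
         = {(a, i). a \<in> rad_on UNIV (+) smA (*) \<and> i \<in> rad_on I (+) smB (*)}"
proof -
  have A: "\<And>c x y. smA c (x + y) = smA c x + smA c y" "\<And>c x y. smA c (x * y) = smA c x * y"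
    "\<And>c x y. x * smA c y = smA c (x * y)"
    using assms(1) unfolding complex_banach_algebra_def by auto
  have B: "\<And>c x y. smB c (x + y) = smB c x + smB c y" "\<And>c x y. smB c (x * y) = smB c x * y"
    "\<And>c x y. x * smB c y = smB c (x * y)"
    using assms(2) unfolding complex_banach_algebra_def by auto
  have smA0: "\<And>c. smA c 0 = 0" using A(1)[of _ 0 0] by simp
  have smB0: "\<And>c. smB c 0 = 0" using B(1)[of _ 0 0] by simp
  have T: "\<And>x y. \<theta> (x + y) = \<theta> x + \<theta> y" "\<And>c x. \<theta> (smA c x) = smB c (\<theta> x)"
    "\<And>x y. \<theta> (x * y) = \<theta> x * \<theta> y"
    using assms(3) unfolding contractive_alg_hom_def by auto
  have T0: "\<theta> 0 = 0" using T(1)[of 0 0] by simp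
  have Iid: "0 \<in> I" "\<And>x y. x \<in> I \<Longrightarrow> y \<in> I \<Longrightarrow> x + y \<in> I" "\<And>c x. x \<in> I \<Longrightarrow> smB c x \<in> I"
    "\<And>b x. x \<in> I \<Longrightarrow> b * x \<in> I" "\<And>b x. x \<in> I \<Longrightarrow> x * b \<in> I"
    using assms(4) unfolding closed_ideal_def by auto
  have comm1: "\<And>a j. j \<in> I \<Longrightarrow> \<theta> a * j = j * \<theta> a"
  proof -
    fix a j assume j: "j \<in> I"
    have "amal_mult \<theta> (a,0) (0,j) = amal_mult \<theta> (0,j) (a,0)"
      using assms(5) j Iid(1) by blast
    then show "\<theta> a * j = j * \<theta> a" unfolding amal_mult_def by simp
  qed
  have comm2: "\<And>i j. i \<in> I \<Longrightarrow> j \<in> I \<Longrightarrow> i * j = j * i"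
  proof -
    fix i j assume i: "i \<in> I" and j: "j \<in> I"
    have "amal_mult \<theta> (0,i) (0,j) = amal_mult \<theta> (0,j) (0,i)"
      using assms(5) i j by blast
    then show "i * j = j * i" unfolding amal_mult_def by (simp add: T0)
  qed
  let ?R = "rad_on (UNIV \<times> I) amal_add (amal_smul smA smB) (amal_mult \<theta>)"
  show ?thesis
  proof (intro set_eqI iffI)
    fix p assume p: "p \<in> ?R"
    obtain a i where pai: "p = (a,i)" by (cases p)
    have iI: "i \<in> I" using p pai unfolding rad_on_def by auto
    have aR: "a \<in> rad_on UNIV (+) smA (*)"
    proof -
      have "\<forall>f. is_character UNIV (+) smA (*) f \<longrightarrow> f a = 0"
      proof (intro allI impI)
        fix f assume f: "is_character UNIV (+) smA (*) f"
        have "(\<lambda>q. f (fst q)) (a,i) = 0"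
        proof (rule rad_zero[OF p[unfolded pai]])
          show "\<forall>x\<in>UNIV \<times> I. \<forall>y\<in>UNIV \<times> I. f (fst (amal_add x y)) = f (fst x) + f (fst y)"
            using f unfolding is_character_def amal_add_def by auto
          show "\<forall>c. \<forall>x\<in>UNIV \<times> I. f (fst (amal_smul smA smB c x)) = c * f (fst x)"
            using f unfolding is_character_def amal_smul_def by auto
          show "\<forall>x\<in>UNIV \<times> I. \<forall>y\<in>UNIV \<times> I. f (fst (amal_mult \<theta> x y)) = f (fst x) * f (fst y)"
            using f unfolding is_character_def amal_mult_def by auto
        qed
        then show "f a = 0" by simp
      qed
      then show ?thesis unfolding rad_on_def by auto
    qed
    have iR: "i \<in> rad_on I (+) smB (*)"
    proof -
      have "\<forall>f. is_character I (+) smB (*) f \<longrightarrow> f i = 0"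
      proof (intro allI impI)
        fix f assume f: "is_character I (+) smB (*) f"
        have fadd: "\<And>x y. x \<in> I \<Longrightarrow> y \<in> I \<Longrightarrow> f (x + y) = f x + f y"
          and fsm: "\<And>c x. x \<in> I \<Longrightarrow> f (smB c x) = c * f x"
          and fmul: "\<And>x y. x \<in> I \<Longrightarrow> y \<in> I \<Longrightarrow> f (x * y) = f x * f y"
          using f unfolding is_character_def by auto
        obtain j0 where j0: "j0 \<in> I" "f j0 \<noteq> 0" using f unfolding is_character_def by auto
        have f0: "f 0 = 0" using fadd[OF Iid(1) Iid(1)] by simp
        define g where "g a = f (\<theta> a * j0) / f j0" for a
        have gkey: "\<And>a j. j \<in> I \<Longrightarrow> f (\<theta> a * j) = g a * f j"
        proof -
          fix a j assume j: "j \<in> I"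
          have "f (\<theta> a * j) * f j0 = f (\<theta> a * j * j0)" using fmul Iid(4) j j0 by simp
          also have "\<theta> a * j * j0 = j * (\<theta> a * j0)" using comm1[OF j] by (simp add: mult.assoc)
          also have "f \<dots> = f j * f (\<theta> a * j0)" using fmul Iid(4) j j0 by simp
          finally show "f (\<theta> a * j) = g a * f j" using j0(2) unfolding g_def
            by (simp add: field_simps)
        qed
        have gadd: "\<And>x y. g (x + y) = g x + g y"
          unfolding g_def using T(1) fadd Iid(4) j0(1) by (simp add: distrib_right add_divide_distrib)
        have gsm: "\<And>c x. g (smA c x) = c * g x"
          unfolding g_def using T(2) B(2)[symmetric] fsm Iid(4) j0(1) by simp
        have gmul: "\<And>x y. g (x * y) = g x * g y"
        proof -
          fix x y
          have "f (\<theta> (x*y) * j0) = f (\<theta> x * (\<theta> y * j0))" using T(3) by (simp add: mult.assoc)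
          also have "\<dots> = g x * f (\<theta> y * j0)" using gkey Iid(4) j0(1) by simp
          finally show "g (x * y) = g x * g y" unfolding g_def by simp
        qed
        have "g a = 0"
          using aR by (rule rad_zero) (auto simp: gadd gsm gmul)
        define h where "h q = g (fst q) + f (snd q)" for q
        have "h (a,i) = 0"
        proof (rule rad_zero[OF p[unfolded pai]])
          show "\<forall>x\<in>UNIV \<times> I. \<forall>y\<in>UNIV \<times> I. h (amal_add x y) = h x + h y"
            unfolding h_def amal_add_def using gadd fadd by auto
          show "\<forall>c. \<forall>x\<in>UNIV \<times> I. h (amal_smul smA smB c x) = c * h x"
            unfolding h_def amal_smul_def using gsm fsm by (auto simp: distrib_left)
          show "\<forall>x\<in>UNIV \<times> I. \<forall>y\<in>UNIV \<times> I. h (amal_mult \<theta> x y) = h x * h y"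
          proof (intro ballI)
            fix x y :: "'a \<times> 'b" assume x: "x \<in> UNIV \<times> I" and y: "y \<in> UNIV \<times> I"
            obtain a1 i1 where x1: "x = (a1,i1)" "i1 \<in> I" using x by auto
            obtain a2 i2 where y1: "y = (a2,i2)" "i2 \<in> I" using y by auto
            have "f (\<theta> a1 * i2 + i1 * \<theta> a2 + i1 * i2)
                = f (\<theta> a1 * i2) + f (i1 * \<theta> a2) + f (i1 * i2)"
              using fadd Iid x1 y1 by simp
            also have "f (i1 * \<theta> a2) = g a2 * f i1" using comm1[OF x1(2)] gkey[OF x1(2)] by metis
            finally show "h (amal_mult \<theta> x y) = h x * h y"
              unfolding h_def amal_mult_def using x1 y1 gkey gmul fmul
              by (simp add: algebra_simps)
          qed
        qed
        then show "f i = 0" using \<open>g a = 0\<close> unfolding h_def by simp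
      qed
      then show ?thesis using iI unfolding rad_on_def by auto
    qed
    show "p \<in> {(a, i). a \<in> rad_on UNIV (+) smA (*) \<and> i \<in> rad_on I (+) smB (*)}"
      using pai aR iR by simp
  next
    fix p assume "p \<in> {(a, i). a \<in> rad_on UNIV (+) smA (*) \<and> i \<in> rad_on I (+) smB (*)}"
    then obtain a i where pai: "p = (a,i)" and aR: "a \<in> rad_on UNIV (+) smA (*)"
      and iR: "i \<in> rad_on I (+) smB (*)" by auto
    have iI: "i \<in> I" using iR unfolding rad_on_def by auto
    have "\<forall>chi. is_character (UNIV \<times> I) amal_add (amal_smul smA smB) (amal_mult \<theta>) chi \<longrightarrow> chi (a,i) = 0"
    proof (intro allI impI)
      fix chi assume ch: "is_character (UNIV \<times> I) amal_add (amal_smul smA smB) (amal_mult \<theta>) chi"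
      have cadd: "\<And>x y. x \<in> UNIV \<times> I \<Longrightarrow> y \<in> UNIV \<times> I \<Longrightarrow> chi (amal_add x y) = chi x + chi y"
        and csm: "\<And>c x. x \<in> UNIV \<times> I \<Longrightarrow> chi (amal_smul smA smB c x) = c * chi x"
        and cmul: "\<And>x y. x \<in> UNIV \<times> I \<Longrightarrow> y \<in> UNIV \<times> I \<Longrightarrow> chi (amal_mult \<theta> x y) = chi x * chi y"
        using ch unfolding is_character_def by auto
      have "chi (a,i) = chi (amal_add (a,0) (0,i))" unfolding amal_add_def by simp
      also have "\<dots> = chi (a,0) + chi (0,i)" using cadd Iid(1) iI by simp
      finally have split: "chi (a,i) = chi (a,0) + chi (0,i)" .
      have "(\<lambda>x. chi (x,0)) a = 0"
        using aR
      proof (rule rad_zero)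
        show "\<forall>x\<in>UNIV. \<forall>y\<in>UNIV. chi (x + y, 0) = chi (x, 0) + chi (y, 0)"
          using cadd[of "(_,0)" "(_,0)"] Iid(1) unfolding amal_add_def by auto
        show "\<forall>c. \<forall>x\<in>UNIV. chi (smA c x, 0) = c * chi (x, 0)"
          using csm[of "(_,0)"] Iid(1) smB0 unfolding amal_smul_def by auto
        show "\<forall>x\<in>UNIV. \<forall>y\<in>UNIV. chi (x * y, 0) = chi (x, 0) * chi (y, 0)"
          using cmul[of "(_,0)" "(_,0)"] Iid(1) unfolding amal_mult_def by auto
      qed
      moreover have "(\<lambda>x. chi (0,x)) i = 0"
        using iR
      proof (rule rad_zero)
        show "\<forall>x\<in>I. \<forall>y\<in>I. chi (0, x + y) = chi (0, x) + chi (0, y)"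
          using cadd[of "(0,_)" "(0,_)"] unfolding amal_add_def by auto
        show "\<forall>c. \<forall>x\<in>I. chi (0, smB c x) = c * chi (0, x)"
          using csm[of "(0,_)"] smA0 unfolding amal_smul_def by auto
        show "\<forall>x\<in>I. \<forall>y\<in>I. chi (0, x * y) = chi (0, x) * chi (0, y)"
          using cmul[of "(0,_)" "(0,_)"] T0 unfolding amal_mult_def
          by auto
      qed
      ultimately show "chi (a,i) = 0" using split by simp
    qed
    then show "p \<in> ?R" using pai iI unfolding rad_on_def by auto
  qed
qed

end
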